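(* Let $d\ge3$. Every $d$-regular graph on $n$ vertices has a total vertex cover with at most $\frac{d}{d+1}\,n$ vertices. Moreover, if $d\ge5$, then every connected $d$-regular graph on $n$ vertices other than the complete graph $K_{d+1}$ has a total vertex cover with at most $\frac{d-\epsilon}{d+1}\,n$ vertices, where $\epsilon=\frac{1}{2d+1}$.
   Context: A total vertex cover of a graph $G$ is a set $S\subseteq V(G)$ that is a vertex cover (every edge has an endpoint in $S$) and a total dominating set (every vertex of $G$, including those in $S$, has a neighbour in $S$). *)

theory Defs
  imports Complex_Main
begin

definition simple_graph :: "'a set \<Rightarrow> ('a \<Rightarrow> 'a \<Rightarrow> bool) \<Rightarrow> bool" where
  "simple_graph V E \<longleftrightarrow> finite V \<and> (\<forall>u v. E u v \<longrightarrow> u \<in> V \<and> v \<in> V)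
     \<and> (\<forall>u v. E u v \<longrightarrow> E v u) \<and> (\<forall>v. \<not> E v v)"

definition neighbours :: "'a set \<Rightarrow> ('a \<Rightarrow> 'a \<Rightarrow> bool) \<Rightarrow> 'a \<Rightarrow> 'a set" where
  "neighbours V E v = {u \<in> V. E v u}"

definition regular :: "'a set \<Rightarrow> ('a \<Rightarrow> 'a \<Rightarrow> bool) \<Rightarrow> nat \<Rightarrow> bool" where
  "regular V E d \<longleftrightarrow> (\<forall>v\<in>V. card (neighbours V E v) = d)"

definition connected_graph :: "'a set \<Rightarrow> ('a \<Rightarrow> 'a \<Rightarrow> bool) \<Rightarrow> bool" where
  "connected_graph V E \<longleftrightarrow> (\<forall>u\<in>V. \<forall>v\<in>V. E\<^sup>*\<^sup>* u v)"

definition is_complete_graph :: "'a set \<Rightarrow> ('a \<Rightarrow> 'a \<Rightarrow> bool) \<Rightarrow> nat \<Rightarrow> bool" where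
  "is_complete_graph V E k \<longleftrightarrow> card V = k \<and> (\<forall>u\<in>V. \<forall>v\<in>V. u \<noteq> v \<longrightarrow> E u v)"

definition vertex_cover :: "'a set \<Rightarrow> ('a \<Rightarrow> 'a \<Rightarrow> bool) \<Rightarrow> 'a set \<Rightarrow> bool" where
  "vertex_cover V E S \<longleftrightarrow> S \<subseteq> V \<and> (\<forall>u v. E u v \<longrightarrow> u \<in> S \<or> v \<in> S)"

definition total_dominating_set :: "'a set \<Rightarrow> ('a \<Rightarrow> 'a \<Rightarrow> bool) \<Rightarrow> 'a set \<Rightarrow> bool" where
  "total_dominating_set V E S \<longleftrightarrow> S \<subseteq> V \<and> (\<forall>v\<in>V. \<exists>u\<in>S. E v u)"

definition total_vertex_cover :: "'a set \<Rightarrow> ('a \<Rightarrow> 'a \<Rightarrow> bool) \<Rightarrow> 'a set \<Rightarrow> bool" where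
  "total_vertex_cover V E S \<longleftrightarrow> vertex_cover V E S \<and> total_dominating_set V E S"

end

theory Submission
  imports Defs
begin

locale rg =
  fixes V :: "'a set" and E :: "'a \<Rightarrow> 'a \<Rightarrow> bool" and d :: nat
  assumes sg: "simple_graph V E" and reg: "regular V E d" and d3: "3 \<le> d"
begin

lemma finV: "finite V" using sg by (simp add: simple_graph_def)
lemma inV: "E u v \<Longrightarrow> u \<in> V \<and> v \<in> V" using sg by (simp add: simple_graph_def)
lemma symE: "E u v \<Longrightarrow> E v u" using sg by (simp add: simple_graph_def)
lemma irr: "\<not> E v v" using sg by (simp add: simple_graph_def)
lemma fin_nb: "finite (neighbours V E v)" using finV by (simp add: neighbours_def)
lemma card_nb: "v \<in> V \<Longrightarrow> card (neighbours V E v) = d" using reg by (simp add: regular_def)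
lemma nb_iff: "w \<in> neighbours V E v \<longleftrightarrow> E v w" using inV by (auto simp: neighbours_def)

definition valid :: "'a set \<Rightarrow> bool" where
  "valid I \<longleftrightarrow> I \<subseteq> V \<and> (\<forall>x\<in>I. \<forall>y\<in>I. \<not> E x y) \<and> (\<forall>v\<in>V-I. \<exists>w. E v w \<and> w \<notin> I)"

lemma has_nb: assumes "v \<in> V" shows "\<exists>w. E v w"
proof -
  have "card (neighbours V E v) = d" using assms by (rule card_nb)
  with d3 have "neighbours V E v \<noteq> {}" by auto
  then obtain w where "w \<in> neighbours V E v" by blast
  then show ?thesis by (auto simp: nb_iff)
qed

lemma valid_empty: "valid {}" using has_nb by (auto simp: valid_def)

lemma valid_tvc: assumes "valid I" shows "total_vertex_cover V E (V - I)"
proof -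
  have a: "I \<subseteq> V" "\<And>x y. x\<in>I \<Longrightarrow> y\<in>I \<Longrightarrow> \<not> E x y" "\<And>v. v\<in>V-I \<Longrightarrow> \<exists>w. E v w \<and> w \<notin> I"
    using assms by (auto simp: valid_def)
  have "\<exists>u\<in>V - I. E v u" if vV: "v \<in> V" for v
  proof (cases "v \<in> I")
    case True
    obtain w where "E v w" using has_nb[OF vV] by blast
    then show ?thesis using True a inV by blast
  next
    case False
    then show ?thesis using a(3) vV inV by blast
  qed
  then show ?thesis
    unfolding total_vertex_cover_def vertex_cover_def total_dominating_set_def
    using a inV by blast
qed

lemma exists_max: "\<exists>I. valid I \<and> (\<forall>J. valid J \<longrightarrow> card J \<le> card I)"
proof -
  let ?C = "card ` {J. valid J}"
  have fin: "finite {J. valid J}"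
    by (rule finite_subset[of _ "Pow V"]) (auto simp: valid_def finV)
  have ne: "?C \<noteq> {}" using valid_empty by auto
  have "Max ?C \<in> ?C" using fin ne by (intro Max_in) auto
  then obtain I where "valid I" "card I = Max ?C" by auto
  moreover have "\<forall>J. valid J \<longrightarrow> card J \<le> Max ?C" using fin by auto
  ultimately show ?thesis by metis
qed

lemma card_filter_sum: "finite B \<Longrightarrow> card {x\<in>B. P x} = (\<Sum>x\<in>B. if P x then 1 else 0::nat)"
  by (simp add: sum.If_cases Collect_conj_eq Int_commute)

lemma dc:
  assumes A: "A \<subseteq> V" and B: "B \<subseteq> V"
  shows "(\<Sum>t\<in>A. card (neighbours V E t \<inter> B)) = (\<Sum>x\<in>B. card (neighbours V E x \<inter> A))"
proof -
  have fA: "finite A" and fB: "finite B" using A B finV finite_subset by auto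
  have 1: "neighbours V E t \<inter> B = {x\<in>B. E t x}" for t using B by (auto simp: nb_iff)
  have 2: "neighbours V E x \<inter> A = {t\<in>A. E t x}" for x using A symE by (auto simp: nb_iff)
  have "(\<Sum>t\<in>A. card (neighbours V E t \<inter> B)) = (\<Sum>t\<in>A. \<Sum>x\<in>B. if E t x then 1 else 0::nat)"
    using fB by (simp add: 1 card_filter_sum)
  also have "\<dots> = (\<Sum>x\<in>B. \<Sum>t\<in>A. if E t x then 1 else 0::nat)" by (rule sum.swap)
  also have "\<dots> = (\<Sum>x\<in>B. card (neighbours V E x \<inter> A))" using fA by (simp add: 2 card_filter_sum)
  finally show ?thesis .
qed

lemma noclique:
  assumes conn: "connected_graph V E" and nc: "\<not> is_complete_graph V E (d+1)" and x: "x \<in> V"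
  shows "\<exists>a b. E x a \<and> E x b \<and> a \<noteq> b \<and> \<not> E a b"
proof (rule ccontr)
  assume "\<not> ?thesis"
  then have cl: "\<And>a b. E x a \<Longrightarrow> E x b \<Longrightarrow> a \<noteq> b \<Longrightarrow> E a b" by blast
  let ?K = "insert x (neighbours V E x)"
  have xn: "x \<notin> neighbours V E x" by (simp add: nb_iff irr)
  have closed: "w \<in> ?K" if "v \<in> ?K" "E v w" for v w
  proof (cases "v = x")
    case True then show ?thesis using that by (simp add: nb_iff)
  next
    case False
    then have xv: "E x v" using that by (simp add: nb_iff)
    have sub: "insert x (neighbours V E x - {v}) \<subseteq> neighbours V E v"
    proof
      fix w assume "w \<in> insert x (neighbours V E x - {v})"
      then have "w = x \<or> (E x w \<and> w \<noteq> v)" by (auto simp: nb_iff)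
      then have "E v w"
      proof
        assume "w = x" then show ?thesis using symE[OF xv] by simp
      next
        assume "E x w \<and> w \<noteq> v" then show ?thesis using cl[OF xv, of w] by auto
      qed
      then show "w \<in> neighbours V E v" by (simp add: nb_iff)
    qed
    have "card (insert x (neighbours V E x - {v})) = Suc (card (neighbours V E x - {v}))"
      using fin_nb xn by simp
    also have "card (neighbours V E x - {v}) = d - 1" using card_nb[OF x] xv fin_nb by (simp add: nb_iff)
    also have "Suc (d-1) = card (neighbours V E v)" using card_nb inV xv d3 by simp
    finally have "insert x (neighbours V E x - {v}) = neighbours V E v"
      using card_subset_eq[OF fin_nb sub] by simp
    then have "w \<in> insert x (neighbours V E x - {v})" using that(2) by (simp add: nb_iff)
    then show ?thesis by blast
  qed
  have reach: "w \<in> ?K" if "E\<^sup>*\<^sup>* x w" for w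
    using that
  proof (induction rule: rtranclp_induct)
    case base then show ?case by simp
  next
    case (step y z) then show ?case using closed by blast
  qed
  have KV: "?K = V"
  proof
    show "?K \<subseteq> V" using x by (auto simp: neighbours_def)
    show "V \<subseteq> ?K"
    proof
      fix v assume "v \<in> V"
      then have "E\<^sup>*\<^sup>* x v" using conn x by (simp add: connected_graph_def)
      then show "v \<in> ?K" by (rule reach)
    qed
  qed
  have "card ?K = Suc d" using fin_nb xn card_nb[OF x] by simp
  then have cV: "card V = d + 1" using KV by simp
  have "\<forall>u\<in>V. \<forall>v\<in>V. u \<noteq> v \<longrightarrow> E u v"
  proof (intro ballI impI)
    fix u v assume "u \<in> V" "v \<in> V" "u \<noteq> v"
    then have u: "u = x \<or> E x u" and v: "v = x \<or> E x v" using KV by (auto simp: nb_iff)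
    show "E u v"
    proof (cases "u = x")
      case True then show ?thesis using v \<open>u \<noteq> v\<close> by auto
    next
      case False
      then have xu: "E x u" using u by auto
      show ?thesis
      proof (cases "v = x")
        case True then show ?thesis using xu symE by auto
      next
        case False then show ?thesis using v xu cl \<open>u \<noteq> v\<close> by auto
      qed
    qed
  qed
  then show False using nc cV by (simp add: is_complete_graph_def)
qed

end

locale mx = rg +
  fixes I assumes vI: "valid I" and maxI: "\<And>J. valid J \<Longrightarrow> card J \<le> card I"
begin

definition dI where "dI t = card (neighbours V E t \<inter> I)"

lemma IV: "I \<subseteq> V" using vI by (simp add: valid_def)
lemma indep: "x \<in> I \<Longrightarrow> y \<in> I \<Longrightarrow> \<not> E x y" using vI by (simp add: valid_def)
lemma domT: "v \<in> V \<Longrightarrow> v \<notin> I \<Longrightarrow> \<exists>w. E v w \<and> w \<notin> I" using vI by (simp add: valid_def)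
lemma finI: "finite I" using IV finV finite_subset by auto

lemma sumT: "(\<Sum>t\<in>V-I. dI t) = d * card I"
proof -
  have "(\<Sum>t\<in>V-I. dI t) = (\<Sum>x\<in>I. card (neighbours V E x \<inter> (V - I)))"
    unfolding dI_def using IV by (intro dc) auto
  also have "\<dots> = (\<Sum>x\<in>I. d)"
  proof (rule sum.cong)
    fix x assume x: "x \<in> I"
    have "neighbours V E x \<inter> (V - I) = neighbours V E x"
      using indep[OF x] by (auto simp: nb_iff neighbours_def)
    then show "card (neighbours V E x \<inter> (V - I)) = d" using card_nb x IV by auto
  qed simp
  finally show ?thesis by simp
qed

lemma dI_ge:
  assumes "t \<in> V" "\<And>w. E t w \<Longrightarrow> w \<in> I \<or> w \<in> Y" "finite Y"
  shows "d \<le> dI t + card Y"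
proof -
  have "neighbours V E t \<subseteq> (neighbours V E t \<inter> I) \<union> Y"
  proof
    fix w assume "w \<in> neighbours V E t"
    then have "E t w" by (simp add: nb_iff)
    then show "w \<in> (neighbours V E t \<inter> I) \<union> Y" using assms(2)[of w] by (auto simp: nb_iff)
  qed
  then have "card (neighbours V E t) \<le> card ((neighbours V E t \<inter> I) \<union> Y)"
    using fin_nb assms(3) by (intro card_mono) auto
  also have "\<dots> \<le> dI t + card Y" unfolding dI_def by (rule card_Un_le)
  finally show ?thesis using card_nb assms(1) by simp
qed

lemma dI_pos: "E x y \<Longrightarrow> x \<in> I \<Longrightarrow> 1 \<le> dI y"
proof -
  assume "E x y" "x \<in> I"
  then have "x \<in> neighbours V E y \<inter> I" using symE by (auto simp: nb_iff)
  then have "neighbours V E y \<inter> I \<noteq> {}" by blast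
  then show ?thesis unfolding dI_def using fin_nb
    by (metis One_nat_def Suc_leI card_gt_0_iff finite_Int)
qed

lemma pendant:
  assumes u: "u \<in> V - I" and d0: "dI u = 0"
  shows "\<exists>w. w \<in> V - I \<and> E w u \<and> (\<forall>w'. E w w' \<longrightarrow> w' \<in> I \<or> w' = u)"
proof -
  have nou: "\<not> E u x" if "x \<in> I" for x
  proof
    assume "E u x"
    then have "1 \<le> dI u" using dI_pos[of x u] that symE by blast
    then show False using d0 by simp
  qed
  have "card (insert u I) = Suc (card I)" using u finI by simp
  then have "\<not> valid (insert u I)" using maxI by fastforce
  moreover have "insert u I \<subseteq> V" using u IV by auto
  moreover have "\<forall>x\<in>insert u I. \<forall>y\<in>insert u I. \<not> E x y" using nou symE indep irr by blast
  ultimately obtain v where v: "v \<in> V - insert u I" "\<forall>w. E v w \<longrightarrow> w \<in> insert u I"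
    unfolding valid_def by blast
  from domT[of v] v obtain w where "E v w" "w \<notin> I" by auto
  then have "E v u" using v by auto
  then show ?thesis using v by auto
qed

lemma lonely:
  assumes conn: "connected_graph V E" and nc: "\<not> is_complete_graph V E (d+1)"
    and x: "x \<in> I" and lon: "\<And>y. E x y \<Longrightarrow> dI y \<le> 1"
  shows "\<exists>z. z \<in> V - I \<and> d \<le> dI z + 2 \<and> (\<exists>y. E z y \<and> y \<notin> I) \<and> (\<forall>y. E z y \<and> y \<notin> I \<longrightarrow> E x y)"
proof -
  obtain a b where ab: "E x a" "E x b" "a \<noteq> b" "\<not> E a b"
    using noclique[OF conn nc] x IV by blast
  have only: "w = x" if "E y w" "w \<in> I" "E x y" for y w
  proof -
    have "dI y \<le> Suc 0" using lon that(3) by simp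
    moreover have "w \<in> neighbours V E y \<inter> I" "x \<in> neighbours V E y \<inter> I"
      using that x symE by (auto simp: nb_iff)
    ultimately show ?thesis unfolding dI_def using card_le_Suc0_iff_eq fin_nb
      by (metis finite_Int)
  qed
  have aI: "a \<notin> I" and bI: "b \<notin> I" using ab indep x by auto
  have xab: "x \<noteq> a" "x \<noteq> b" using ab irr by auto
  let ?J = "insert a (insert b (I - {x}))"
  have "card (I - {x}) = card I - 1" using x finI by simp
  then have "card ?J = Suc (card I)" using aI bI ab(3) finI x
    by (simp add: card_gt_0_iff) (metis Suc_pred card_gt_0_iff empty_iff)
  then have "\<not> valid ?J" using maxI by fastforce
  moreover have "?J \<subseteq> V" using IV ab inV by auto
  moreover have "\<forall>p\<in>?J. \<forall>q\<in>?J. \<not> E p q"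
  proof (intro ballI)
    fix p q assume p: "p \<in> ?J" and q: "q \<in> ?J"
    show "\<not> E p q"
    proof
      assume pq: "E p q"
      have "p \<noteq> q" using pq irr by auto
      show False
        using p q pq only[of a q] only[of b q] only[of a p] only[of b p] ab symE indep irr
        by auto
    qed
  qed
  ultimately obtain v where v: "v \<in> V - ?J" "\<forall>w. E v w \<longrightarrow> w \<in> ?J"
    unfolding valid_def by blast
  have vx: "v \<noteq> x"
  proof
    assume "v = x"
    then have "neighbours V E x \<subseteq> {a, b}" using v indep x by (auto simp: nb_iff)
    then have "card (neighbours V E x) \<le> card {a,b}" by (intro card_mono) auto
    also have "\<dots> \<le> 2" by (simp add: card_insert_le_m1)
    finally show False using card_nb x IV d3 by auto
  qed
  have vnx: "\<not> E x v"
  proof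
    assume "E x v"
    then have "x \<in> ?J" using v symE by blast
    then show False using xab by auto
  qed
  have vT: "v \<in> V - I" using v vx by auto
  have "d \<le> dI v + card {a, b}"
    using vT v by (intro dI_ge) auto
  then have "d \<le> dI v + 2" using ab(3) by simp
  moreover obtain y where "E v y" "y \<notin> I" using domT vT by auto
  moreover have "\<forall>y. E v y \<and> y \<notin> I \<longrightarrow> E x y" using v ab by auto
  ultimately show ?thesis using vT by blast
qed

lemma part1: "card (V - I) \<le> d * card I"
proof -
  let ?T = "V - I"
  let ?U = "{t\<in>?T. dI t = 0}"
  have "\<forall>u\<in>?U. \<exists>w. w \<in> V - I \<and> E w u \<and> (\<forall>w'. E w w' \<longrightarrow> w' \<in> I \<or> w' = u)"
    using pendant by blast
  from bchoice[OF this] obtain g where g: "\<forall>u\<in>?U. g u \<in> V - I \<and> E (g u) u \<and> (\<forall>w'. E (g u) w' \<longrightarrow> w' \<in> I \<or> w' = u)"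
    by blast
  have inj: "inj_on g ?U"
  proof
    fix u u' assume uu: "u \<in> ?U" "u' \<in> ?U" "g u = g u'"
    then have "E (g u) u'" using g by metis
    then have "u' \<in> I \<or> u' = u" using g uu(1) by blast
    then show "u = u'" using uu(2) by auto
  qed
  let ?P = "g ` ?U"
  have cP: "card ?P = card ?U" using inj by (simp add: card_image)
  have Pge: "d \<le> dI t + 1" if tP: "t \<in> ?P" for t
  proof -
    obtain u where u: "u \<in> ?U" "t = g u" using tP by auto
    have "d \<le> dI t + card {u}" using g u by (intro dI_ge) auto
    then show ?thesis by simp
  qed
  have PT: "?P \<subseteq> ?T" using g by auto
  have pw: "int (dI t) \<ge> 1 - of_bool (t \<in> ?U) + of_bool (t \<in> ?P)" if "t \<in> ?T" for t
  proof (cases "t \<in> ?P")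
    case True then show ?thesis using Pge[OF True] d3 by auto
  next
    case False
    then show ?thesis using that by (cases "dI t = 0") auto
  qed
  have finT: "finite ?T" using finV by simp
  have "(\<Sum>t\<in>?T. (1 - of_bool (t \<in> ?U) + of_bool (t \<in> ?P) :: int)) \<le> (\<Sum>t\<in>?T. int (dI t))"
    using pw by (intro sum_mono) auto
  moreover have "(\<Sum>t\<in>?T. (1 - of_bool (t \<in> ?U) + of_bool (t \<in> ?P) :: int))
      = int (card ?T) - int (card (?T \<inter> ?U)) + int (card (?T \<inter> ?P))"
    using finT by (simp add: sum.distrib sum_subtractf sum_of_bool_eq) (intro arg_cong[where f=card]; blast)
  moreover have "?T \<inter> ?U = ?U" "?T \<inter> ?P = ?P" using PT by auto
  moreover have "(\<Sum>t\<in>?T. int (dI t)) = int (d * card I)" using sumT by (metis of_nat_sum)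
  ultimately have "int (card ?T) \<le> int d * int (card I)" using cP by simp
  then show ?thesis by (metis of_nat_le_iff of_nat_mult)
qed

lemma part2:
  assumes conn: "connected_graph V E" and nc: "\<not> is_complete_graph V E (d+1)" and d5: "5 \<le> d"
  shows "int (card I) \<le> 2 * (int (d * card I) - int (card (V - I)))"
proof -
  let ?T = "V - I"
  let ?U = "{t\<in>?T. dI t = 0}"
  have "\<forall>u\<in>?U. \<exists>w. w \<in> V - I \<and> E w u \<and> (\<forall>w'. E w w' \<longrightarrow> w' \<in> I \<or> w' = u)"
    using pendant by blast
  from bchoice[OF this] obtain g where g: "\<forall>u\<in>?U. g u \<in> V - I \<and> E (g u) u \<and> (\<forall>w'. E (g u) w' \<longrightarrow> w' \<in> I \<or> w' = u)"
    by blast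
  have inj: "inj_on g ?U"
  proof
    fix u u' assume uu: "u \<in> ?U" "u' \<in> ?U" "g u = g u'"
    then have "E (g u) u'" using g by metis
    then have "u' \<in> I \<or> u' = u" using g uu(1) by blast
    then show "u = u'" using uu(2) by auto
  qed
  let ?P = "g ` ?U"
  have cP: "card ?P = card ?U" using inj by (simp add: card_image)
  have Pge: "d \<le> dI t + 1" if tP: "t \<in> ?P" for t
  proof -
    obtain u where u: "u \<in> ?U" "t = g u" using tP by auto
    have "d \<le> dI t + card {u}" using g u by (intro dI_ge) auto
    then show ?thesis by simp
  qed
  have PT: "?P \<subseteq> ?T" using g by auto
  let ?L = "{x\<in>I. \<forall>y. E x y \<longrightarrow> dI y \<le> 1}"
  have "\<forall>x\<in>?L. \<exists>z. z \<in> V - I \<and> d \<le> dI z + 2 \<and> (\<exists>y. E z y \<and> y \<notin> I) \<and> (\<forall>y. E z y \<and> y \<notin> I \<longrightarrow> E x y)"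
    using lonely[OF conn nc] by blast
  from bchoice[OF this] obtain f where f: "\<forall>x\<in>?L. f x \<in> V - I \<and> d \<le> dI (f x) + 2 \<and> (\<exists>y. E (f x) y \<and> y \<notin> I) \<and> (\<forall>y. E (f x) y \<and> y \<notin> I \<longrightarrow> E x y)"
    by blast
  have injf: "inj_on f ?L"
  proof
    fix x x' assume x: "x \<in> ?L" and x': "x' \<in> ?L" and eq: "f x = f x'"
    obtain y where y: "E (f x) y" "y \<notin> I" using f x by blast
    have fx: "\<forall>y. E (f x) y \<and> y \<notin> I \<longrightarrow> E x y" using f x by blast
    have fx': "\<forall>y. E (f x') y \<and> y \<notin> I \<longrightarrow> E x' y" using f x' by blast
    have "E x y" using fx y by blast
    have "E x' y" using fx' y eq by simp
    then have "x \<in> neighbours V E y \<inter> I" "x' \<in> neighbours V E y \<inter> I"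
      using x x' symE[OF \<open>E x y\<close>] symE[OF \<open>E x' y\<close>] by (auto simp: nb_iff)
    moreover have "dI y \<le> Suc 0" using x \<open>E x y\<close> by simp
    moreover have "finite (neighbours V E y \<inter> I)" using fin_nb by simp
    ultimately show "x = x'" unfolding dI_def using card_le_Suc0_iff_eq by blast
  qed
  let ?Z = "f ` ?L"
  have cZ: "card ?Z = card ?L" using injf by (simp add: card_image)
  have fZ: "f x \<in> V - I \<and> d \<le> dI (f x) + 2" if "x \<in> ?L" for x using f that by blast
  have ZT: "?Z \<subseteq> ?T" using fZ by blast
  have Zge: "d \<le> dI t + 2" if tZ: "t \<in> ?Z" for t
  proof -
    obtain x where "x \<in> ?L" "t = f x" using tZ by blast
    then show ?thesis using fZ by blast
  qed
  have PZ: "t \<notin> ?Z" if tP: "t \<in> ?P" for t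
  proof
    assume tZ: "t \<in> ?Z"
    obtain u where u: "u \<in> ?U" "t = g u" using tP by auto
    obtain x where x: "x \<in> ?L" "t = f x" using tZ by auto
    obtain y where y: "E t y" "y \<notin> I" using f x by blast
    have fx: "\<forall>y. E (f x) y \<and> y \<notin> I \<longrightarrow> E x y" using f x(1) by blast
    have "E x y" using fx y x(2) by simp
    then have "1 \<le> dI y" using dI_pos[of x y] x by simp
    have gu: "\<forall>w'. E (g u) w' \<longrightarrow> w' \<in> I \<or> w' = u" using g u(1) by blast
    have "y = u" using gu y u(2) by blast
    then show False using \<open>1 \<le> dI y\<close> u by simp
  qed
  let ?T2 = "{t\<in>?T. 2 \<le> dI t}"
  have finT: "finite ?T" using finV by simp
  have pw: "2 * (int (dI t) - 1) \<ge> (if 2 \<le> dI t then int (dI t) else 0) - 2 * of_bool (t \<in> ?U)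
      + 2 * of_bool (t \<in> ?P) + of_bool (t \<in> ?Z)" if "t \<in> ?T" for t
  proof (cases "t \<in> ?P")
    case True then show ?thesis using Pge[OF True] PZ[OF True] d5 by auto
  next
    case False
    show ?thesis
    proof (cases "t \<in> ?Z")
      case True then show ?thesis using Zge[OF True] False d5 by auto
    next
      case False2: False
      then show ?thesis using False that by (cases "dI t = 0") auto
    qed
  qed
  have "(\<Sum>t\<in>?T. (if 2 \<le> dI t then int (dI t) else 0) - 2 * of_bool (t \<in> ?U)
      + 2 * of_bool (t \<in> ?P) + of_bool (t \<in> ?Z)) \<le> (\<Sum>t\<in>?T. 2 * (int (dI t) - 1))"
    using pw by (intro sum_mono) auto
  moreover have s2: "(\<Sum>t\<in>?T. (if 2 \<le> dI t then int (dI t) else 0) - 2 * of_bool (t \<in> ?U)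
      + 2 * of_bool (t \<in> ?P) + of_bool (t \<in> ?Z))
     = (\<Sum>t\<in>?T. (if 2 \<le> dI t then int (dI t) else 0)) - 2 * int (card (?T \<inter> ?U))
      + 2 * int (card (?T \<inter> ?P)) + int (card (?T \<inter> ?Z))"
    using finT by (simp add: sum.distrib sum_subtractf sum_of_bool_eq sum_distrib_left[symmetric]) (intro arg_cong[where f=card]; blast)
  moreover have s3: "?T \<inter> ?U = ?U" "?T \<inter> ?P = ?P" "?T \<inter> ?Z = ?Z" using PT ZT by auto
  moreover have "(\<Sum>t\<in>?T. 2 * (int (dI t) - 1)) = 2 * (int (d * card I) - int (card ?T))"
  proof -
    have "(\<Sum>t\<in>?T. 2 * (int (dI t) - 1)) = 2 * ((\<Sum>t\<in>?T. int (dI t)) - int (card ?T))"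
      by (simp add: sum_distrib_left[symmetric] sum_subtractf)
    also have "(\<Sum>t\<in>?T. int (dI t)) = int (d * card I)" using sumT by (metis of_nat_sum)
    finally show ?thesis .
  qed
  moreover have "int (card I) - int (card ?L) \<le> (\<Sum>t\<in>?T. (if 2 \<le> dI t then int (dI t) else 0))"
  proof -
    have e1: "(\<Sum>t\<in>?T. (if 2 \<le> dI t then int (dI t) else 0)) = (\<Sum>t\<in>?T2. int (dI t))"
      by (rule sum.inter_filter[symmetric, OF finT])
    have e2: "(\<Sum>t\<in>?T2. int (dI t)) = int (\<Sum>t\<in>?T2. dI t)" by simp
    have e3: "(\<Sum>t\<in>?T2. dI t) = (\<Sum>x\<in>I. card (neighbours V E x \<inter> ?T2))"
      unfolding dI_def using IV by (intro dc) auto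
    have e4: "(\<Sum>x\<in>I. of_bool (x \<notin> ?L) :: nat) \<le> (\<Sum>x\<in>I. card (neighbours V E x \<inter> ?T2))"
    proof (rule sum_mono)
      fix x assume x: "x \<in> I"
      show "of_bool (x \<notin> ?L) \<le> card (neighbours V E x \<inter> ?T2)"
      proof (cases "x \<in> ?L")
        case False
        then obtain y where y: "E x y" "2 \<le> dI y" using x by auto
        then have "y \<in> neighbours V E x \<inter> ?T2" using indep[OF x] inV by (auto simp: nb_iff)
        then have "card (neighbours V E x \<inter> ?T2) \<noteq> 0" using fin_nb by (metis card_0_eq empty_iff finite_Int)
        then show ?thesis using False by simp
      qed simp
    qed
    have e5: "(\<Sum>x\<in>I. of_bool (x \<notin> ?L) :: nat) = card (I \<inter> {x. x \<notin> ?L})"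
      using finI by (simp add: sum_of_bool_eq) (intro arg_cong[where f=card]; blast)
    have e6: "I \<inter> {x. x \<notin> ?L} = I - ?L" by auto
    have e7: "card (I - ?L) = card I - card ?L" using finI by (intro card_Diff_subset) auto
    have e8: "card ?L \<le> card I" using finI by (intro card_mono) auto
    have "card I - card ?L \<le> (\<Sum>t\<in>?T2. dI t)" using e3 e4 e5 e6 e7 by simp
    then have "int (card I - card ?L) \<le> int (\<Sum>t\<in>?T2. dI t)" by (simp only: of_nat_le_iff)
    then show ?thesis using e1 e2 e8 by (simp add: of_nat_diff)
  qed
  moreover note s2[unfolded s3]
  ultimately show ?thesis using cP cZ by linarith
qed

end

theorem theorem1p6:
  fixes d :: nat
  assumes "d \<ge> 3"
  shows "(\<forall>(V :: 'a set) E. simple_graph V E \<and> regular V E d \<longrightarrow>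
            (\<exists>S. total_vertex_cover V E S \<and> real (card S) \<le> real d / real (d + 1) * real (card V)))
       \<and> (d \<ge> 5 \<longrightarrow>
            (\<forall>(V :: 'a set) E. simple_graph V E \<and> regular V E d \<and> connected_graph V E
                 \<and> \<not> is_complete_graph V E (d + 1) \<longrightarrow>
               (\<exists>S. total_vertex_cover V E S \<and>
                  real (card S) \<le> (real d - 1 / (2 * real d + 1)) / real (d + 1) * real (card V))))"
proof (intro conjI allI impI)
  fix V :: "'a set" and E
  assume h: "simple_graph V E \<and> regular V E d"
  interpret rg V E d using h assms by unfold_locales auto
  obtain I where I: "valid I" "\<forall>J. valid J \<longrightarrow> card J \<le> card I" using exists_max by blast
  interpret mx V E d I using I by unfold_locales auto
  have cV: "card V = card (V - I) + card I" using IV finV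
    by (metis card_Diff_subset finite_subset le_add_diff_inverse2 card_mono)
  have "card (V - I) \<le> d * card I" by (rule part1)
  then have "real (card (V - I)) \<le> real d * real (card I)" by (metis of_nat_le_iff of_nat_mult)
  then have "real (card (V - I)) * real (d + 1) \<le> real d * real (card V)"
    using cV by (simp add: algebra_simps)
  then have "real (card (V - I)) \<le> real d / real (d + 1) * real (card V)"
    by (simp add: field_simps)
  then show "\<exists>S. total_vertex_cover V E S \<and> real (card S) \<le> real d / real (d + 1) * real (card V)"
    using valid_tvc[OF vI] by blast
next
  fix V :: "'a set" and E
  assume d5: "5 \<le> d" and h: "simple_graph V E \<and> regular V E d \<and> connected_graph V E
                 \<and> \<not> is_complete_graph V E (d + 1)"
  interpret rg V E d using h assms by unfold_locales auto
  obtain I where I: "valid I" "\<forall>J. valid J \<longrightarrow> card J \<le> card I" using exists_max by blast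
  interpret mx V E d I using I by unfold_locales auto
  have cV: "card V = card (V - I) + card I" using IV finV
    by (metis card_Diff_subset finite_subset le_add_diff_inverse2 card_mono)
  have "int (card I) \<le> 2 * (int (d * card I) - int (card (V - I)))"
    using part2 h d5 by blast
  then have r: "real (card I) \<le> 2 * (real d * real (card I) - real (card (V - I)))"
    by (metis (mono_tags, opaque_lifting) of_int_le_iff of_int_mult of_int_diff of_int_of_nat_eq
        of_nat_mult of_int_numeral)
  have "(real d - 1 / (2 * real d + 1)) / real (d + 1) = (2 * real d - 1) / (2 * real d + 1)"
  proof -
    have p: "2 * real d + 1 > 0" "real d + 1 > 0" by auto
    have "real d - 1 / (2 * real d + 1) = (2 * real d - 1) * (real d + 1) / (2 * real d + 1)"
      using p by (simp add: field_simps)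
    then show ?thesis using p by (simp add: add.commute)
  qed
  moreover have "real (card (V - I)) \<le> (2 * real d - 1) / (2 * real d + 1) * real (card V)"
    using r cV by (simp add: field_simps)
  ultimately have "real (card (V - I)) \<le> (real d - 1 / (2 * real d + 1)) / real (d + 1) * real (card V)"
    by simp
  then show "\<exists>S. total_vertex_cover V E S \<and>
                  real (card S) \<le> (real d - 1 / (2 * real d + 1)) / real (d + 1) * real (card V)"
    using valid_tvc[OF vI] by blast
qed

end
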